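(* Let $(X_i)_{i\in\mathbb N}$ be a countable family of independent $\{0,1\}$-valued random variables and let $X=\sum_i X_i$ with $\mathbb E(X)<\infty$. Then for all integers $k\ge 2$, $$\mathbb E(X^k)\le \mathbb E(X^{k-1})\cdot\big(k-1+\mathbb E(X)\big).$$ *)

theory Defs
  imports "HOL-Probability.Probability"
begin
end

theory Submission
  imports Defs
begin

lemma (in prob_space) indep_var_nn_integral_ennreal:
  fixes X Y :: "'a \<Rightarrow> ennreal"
  assumes "indep_var borel X borel Y"
  shows "(\<integral>\<^sup>+\<omega>. X \<omega> * Y \<omega> \<partial>M) = (\<integral>\<^sup>+\<omega>. X \<omega> \<partial>M) * (\<integral>\<^sup>+\<omega>. Y \<omega> \<partial>M)"
proof -
  have **: "(\<lambda> _. borel) = case_bool borel borel"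
    by (rule ext, metis (full_types) bool.simps(3) bool.simps(4))
  have ind: "indep_vars (\<lambda>_. borel) (case_bool X Y) UNIV"
    using assms unfolding indep_var_def ** .
  have "(\<integral>\<^sup>+\<omega>. (\<Prod>i\<in>UNIV. case_bool X Y i \<omega>) \<partial>M) = (\<Prod>i\<in>UNIV. \<integral>\<^sup>+\<omega>. case_bool X Y i \<omega> \<partial>M)"
    by (rule indep_vars_nn_integral) (use ind in auto)
  then show ?thesis by (simp add: UNIV_bool mult.commute)
qed

lemma ennreal_pow_step:
  fixes y :: ennreal
  shows "(y + 1) ^ Suc m \<le> y ^ Suc m + of_nat (Suc m) * (y + 1) ^ m"
proof (induction m)
  case 0
  then show ?case by simp
next
  case (Suc m)
  have "(y + 1) ^ Suc (Suc m) = (y + 1) * (y + 1) ^ Suc m" by simp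
  also have "\<dots> \<le> (y + 1) * (y ^ Suc m + of_nat (Suc m) * (y + 1) ^ m)"
    by (rule mult_left_mono[OF Suc]) simp
  also have "\<dots> = y ^ Suc (Suc m) + y ^ Suc m + of_nat (Suc m) * (y + 1) ^ Suc m"
    by (simp add: algebra_simps)
  also have "\<dots> \<le> y ^ Suc (Suc m) + (y + 1) ^ Suc m + of_nat (Suc m) * (y + 1) ^ Suc m"
    by (intro add_mono order_refl power_mono) auto
  also have "\<dots> = y ^ Suc (Suc m) + of_nat (Suc (Suc m)) * (y + 1) ^ Suc m"
    by (simp add: algebra_simps)
  finally show ?case .
qed

lemma ennreal_suminf_split:
  fixes f :: "nat \<Rightarrow> ennreal"
  shows "(\<Sum>j. f j) = f i + (\<Sum>j. if j = i then 0 else f j)"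
proof -
  have "(\<Sum>j. f j) = (\<Sum>j. (if j = i then f i else 0) + (if j = i then 0 else f j))"
    by (intro suminf_cong) auto
  also have "\<dots> = (\<Sum>j. (if j = i then f i else 0)) + (\<Sum>j. if j = i then 0 else f j)"
    by (rule suminf_add[symmetric]) auto
  also have "(\<Sum>j. (if j = i then f i else 0)) = f i"
    by (subst suminf_finite[of "{i}"]) auto
  finally show ?thesis .
qed

theorem lemma3p2:
  fixes M :: "'a measure" and Xs :: "nat \<Rightarrow> 'a \<Rightarrow> real" and k :: nat
  assumes "prob_space M"
    and "prob_space.indep_vars M (\<lambda>_. borel) Xs UNIV"
    and "\<And>i \<omega>. \<omega> \<in> space M \<Longrightarrow> Xs i \<omega> \<in> {0, 1}"
    and "(\<integral>\<^sup>+ \<omega>. (\<Sum>i. ennreal (Xs i \<omega>)) \<partial>M) < \<infinity>"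
    and "k \<ge> 2"
  shows "(\<integral>\<^sup>+ \<omega>. (\<Sum>i. ennreal (Xs i \<omega>)) ^ k \<partial>M)
         \<le> (\<integral>\<^sup>+ \<omega>. (\<Sum>i. ennreal (Xs i \<omega>)) ^ (k - 1) \<partial>M)
            * (of_nat (k - 1) + (\<integral>\<^sup>+ \<omega>. (\<Sum>i. ennreal (Xs i \<omega>)) \<partial>M))"
proof -
  interpret prob_space M by fact
  have ind: "indep_vars (\<lambda>_. borel) Xs UNIV" using assms(2) .
  obtain n where k: "k = Suc (Suc n)" using assms(5) by (metis add_2_eq_Suc le_Suc_ex)
  define m where "m = Suc n"
  define x where "x i \<omega> = ennreal (Xs i \<omega>)" for i \<omega>
  define S where "S \<omega> = (\<Sum>i. x i \<omega>)" for \<omega>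
  define Y where "Y i \<omega> = (\<Sum>j. if j = i then 0 else x j \<omega>)" for i \<omega>
  have Xm[measurable]: "Xs i \<in> borel_measurable M" for i
    using ind by (auto simp: indep_vars_def)
  have xm[measurable]: "x i \<in> borel_measurable M" for i
    unfolding x_def by measurable
  have Sm[measurable]: "S \<in> borel_measurable M"
    unfolding S_def by measurable
  have Ym[measurable]: "Y i \<in> borel_measurable M" for i
    unfolding Y_def by measurable
  have x01: "x i \<omega> = 0 \<or> x i \<omega> = 1" if "\<omega> \<in> space M" for i \<omega>
    using assms(3)[OF that, of i] by (auto simp: x_def)
  have Ssplit: "S \<omega> = x i \<omega> + Y i \<omega>" for i \<omega>
    unfolding S_def Y_def by (rule ennreal_suminf_split)
  have YleS: "Y i \<omega> \<le> S \<omega>" for i \<omega>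
    unfolding Ssplit[of \<omega> i] by (rule add_increasing) auto
  have trm: "x i \<omega> * S \<omega> ^ m \<le> x i \<omega> * Y i \<omega> ^ m + of_nat m * (x i \<omega> * S \<omega> ^ n)"
    if "\<omega> \<in> space M" for i \<omega>
  proof (cases "x i \<omega> = 0")
    case True then show ?thesis by simp
  next
    case False
    then have "x i \<omega> = 1" using x01[OF that] by auto
    then show ?thesis using ennreal_pow_step[of "Y i \<omega>" n] Ssplit[of \<omega> i]
      by (simp add: m_def add.commute)
  qed
  have pw: "S \<omega> ^ k \<le> (\<Sum>i. x i \<omega> * Y i \<omega> ^ m) + of_nat m * S \<omega> ^ m"
    if "\<omega> \<in> space M" for \<omega>
  proof -
    have "S \<omega> ^ k = (\<Sum>i. x i \<omega> * S \<omega> ^ m)"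
      by (simp add: k m_def S_def ennreal_suminf_cmult mult.commute)
    also have "\<dots> \<le> (\<Sum>i. x i \<omega> * Y i \<omega> ^ m + of_nat m * (x i \<omega> * S \<omega> ^ n))"
      by (intro suminf_le trm[OF that]) auto
    also have "\<dots> = (\<Sum>i. x i \<omega> * Y i \<omega> ^ m) + (\<Sum>i. of_nat m * (x i \<omega> * S \<omega> ^ n))"
      by (rule suminf_add[symmetric]) auto
    also have "(\<Sum>i. of_nat m * (x i \<omega> * S \<omega> ^ n)) = of_nat m * S \<omega> ^ m"
      by (simp add: ennreal_suminf_cmult m_def S_def mult.commute mult.left_commute)
    finally show ?thesis .
  qed
  have indep: "(\<integral>\<^sup>+\<omega>. x i \<omega> * Y i \<omega> ^ m \<partial>M) = (\<integral>\<^sup>+\<omega>. x i \<omega> \<partial>M) * (\<integral>\<^sup>+\<omega>. Y i \<omega> ^ m \<partial>M)" for i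
  proof (rule indep_var_nn_integral_ennreal)
    have r: "indep_var (PiM {i} (\<lambda>_. borel)) (\<lambda>\<omega>. restrict (\<lambda>j. Xs j \<omega>) {i})
       (PiM (-{i}) (\<lambda>_. borel)) (\<lambda>\<omega>. restrict (\<lambda>j. Xs j \<omega>) (-{i}))"
      by (rule indep_var_restrict[OF ind]) auto
    have f: "(\<lambda>v. ennreal (v i)) \<in> borel_measurable (PiM {i} (\<lambda>_. borel :: real measure))"
      by measurable
    have g0: "(\<lambda>v. if j = i then 0 else ennreal (v j)) \<in> borel_measurable (PiM (-{i}) (\<lambda>_. borel :: real measure))" for j
      by (cases "j = i") auto
    have g: "(\<lambda>v. (\<Sum>j. if j = i then 0 else ennreal (v j)) ^ m) \<in> borel_measurable (PiM (-{i}) (\<lambda>_. borel :: real measure))"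
      using g0 by measurable
    have "indep_var borel ((\<lambda>v. ennreal (v i)) \<circ> (\<lambda>\<omega>. restrict (\<lambda>j. Xs j \<omega>) {i}))
       borel ((\<lambda>v. (\<Sum>j. if j = i then 0 else ennreal (v j)) ^ m) \<circ> (\<lambda>\<omega>. restrict (\<lambda>j. Xs j \<omega>) (-{i})))"
      by (rule indep_var_compose[OF r f g])
    moreover have "((\<lambda>v. ennreal (v i)) \<circ> (\<lambda>\<omega>. restrict (\<lambda>j. Xs j \<omega>) {i})) = x i"
      by (auto simp: x_def fun_eq_iff)
    moreover have "((\<lambda>v. (\<Sum>j. if j = i then 0 else ennreal (v j)) ^ m) \<circ> (\<lambda>\<omega>. restrict (\<lambda>j. Xs j \<omega>) (-{i}))) = (\<lambda>\<omega>. Y i \<omega> ^ m)"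
      by (auto simp: Y_def x_def fun_eq_iff intro!: arg_cong[where f="\<lambda>z. z ^ m"] suminf_cong)
    ultimately show "indep_var borel (x i) borel (\<lambda>\<omega>. Y i \<omega> ^ m)" by simp
  qed
  have "(\<integral>\<^sup>+\<omega>. S \<omega> ^ k \<partial>M) \<le> (\<integral>\<^sup>+\<omega>. (\<Sum>i. x i \<omega> * Y i \<omega> ^ m) + of_nat m * S \<omega> ^ m \<partial>M)"
    by (intro nn_integral_mono pw)
  also have "\<dots> = (\<integral>\<^sup>+\<omega>. (\<Sum>i. x i \<omega> * Y i \<omega> ^ m) \<partial>M) + of_nat m * (\<integral>\<^sup>+\<omega>. S \<omega> ^ m \<partial>M)"
    by (simp add: nn_integral_add nn_integral_cmult)
  also have "(\<integral>\<^sup>+\<omega>. (\<Sum>i. x i \<omega> * Y i \<omega> ^ m) \<partial>M) = (\<Sum>i. \<integral>\<^sup>+\<omega>. x i \<omega> * Y i \<omega> ^ m \<partial>M)"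
    by (rule nn_integral_suminf) measurable
  also have "\<dots> = (\<Sum>i. (\<integral>\<^sup>+\<omega>. x i \<omega> \<partial>M) * (\<integral>\<^sup>+\<omega>. Y i \<omega> ^ m \<partial>M))"
    by (simp add: indep)
  also have "\<dots> \<le> (\<Sum>i. (\<integral>\<^sup>+\<omega>. x i \<omega> \<partial>M) * (\<integral>\<^sup>+\<omega>. S \<omega> ^ m \<partial>M))"
    by (intro suminf_le mult_left_mono nn_integral_mono power_mono YleS) auto
  also have "\<dots> = (\<integral>\<^sup>+\<omega>. S \<omega> \<partial>M) * (\<integral>\<^sup>+\<omega>. S \<omega> ^ m \<partial>M)"
    by (simp add: ennreal_suminf_cmult mult.commute S_def nn_integral_suminf)
  finally have "(\<integral>\<^sup>+\<omega>. S \<omega> ^ k \<partial>M) \<le> (\<integral>\<^sup>+\<omega>. S \<omega> ^ m \<partial>M) * (of_nat m + (\<integral>\<^sup>+\<omega>. S \<omega> \<partial>M))"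
    by (simp add: algebra_simps)
  then show ?thesis
    by (simp add: S_def x_def k m_def)
qed

end
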